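(* Let $k\ge 7$ be an integer and $r=(\log k)^2/k$ (natural logarithm). For $\delta\in[0,1]$ let $g(\delta)=k\delta(1-\delta)^{k-1}$ and \[ \gamma(\delta)=\frac{g(\delta)^{r}}{\delta^{\delta}(1-\delta)^{1-\delta}} \] (with the convention $0^0=1$). Then $\max_{\delta\in[0,1]}\gamma(\delta)<1$. *)

theory Defs
  imports "HOL-Analysis.Analysis"
begin

definition pow00 :: "real \<Rightarrow> real \<Rightarrow> real" where
  "pow00 x a = (if x = 0 then (if a = 0 then 1 else 0) else x powr a)"

definition gfun :: "nat \<Rightarrow> real \<Rightarrow> real" where
  "gfun k \<delta> = real k * \<delta> * (1 - \<delta>) ^ (k - 1)"

definition rpar :: "nat \<Rightarrow> real" where
  "rpar k = (ln (real k))\<^sup>2 / real k"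

definition gamma_fun :: "nat \<Rightarrow> real \<Rightarrow> real" where
  "gamma_fun k \<delta> = pow00 (gfun k \<delta>) (rpar k) /
      (pow00 \<delta> \<delta> * pow00 (1 - \<delta>) (1 - \<delta>))"

end

theory Submission
  imports Defs "HOL-Real_Asymp.Real_Asymp"
begin

lemma ln_lower:
  fixes u :: real assumes "0 \<le> u"
  shows "2*u/(2+u) \<le> ln (1+u)"
proof -
  let ?f = "\<lambda>u::real. ln (1+u) - 2*u/(2+u)"
  have "?f 0 \<le> ?f u"
  proof (rule DERIV_nonneg_imp_nondecreasing[OF assms])
    fix x :: real assume x: "0 \<le> x" "x \<le> u"
    have d: "DERIV ?f x :> (1/(1+x) - (2*(2+x) - 2*x)/(2+x)^2)"
      using x by (auto intro!: derivative_eq_intros simp: power2_eq_square)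
    have "(2*(2+x) - 2*x)/(2+x)^2 \<le> 1/(1+x)"
      using x by (simp add: divide_simps power2_eq_square) (simp add: algebra_simps)
    with d show "\<exists>y. DERIV ?f x :> y \<and> 0 \<le> y" by (intro exI[of _ "(1/(1+x) - (2*(2+x) - 2*x)/(2+x)^2)"]) auto
  qed
  then show ?thesis by simp
qed

lemma ln_upper:
  fixes u :: real assumes "0 \<le> u"
  shows "ln (1+u) \<le> u*(6+u)/(6+4*u)"
proof -
  let ?f = "\<lambda>u::real. u*(6+u)/(6+4*u) - ln (1+u)"
  have "?f 0 \<le> ?f u"
  proof (rule DERIV_nonneg_imp_nondecreasing[OF assms])
    fix x :: real assume x: "0 \<le> x" "x \<le> u"
    have d: "DERIV ?f x :> (((6+2*x)*(6+4*x) - 4*(x*(6+x)))/(6+4*x)^2 - 1/(1+x))"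
      using x by (auto intro!: derivative_eq_intros simp: power2_eq_square algebra_simps)
    have "1/(1+x) \<le> ((6+2*x)*(6+4*x) - 4*(x*(6+x)))/(6+4*x)^2"
      using x by (simp add: divide_simps power2_eq_square) (simp add: algebra_simps)
    with d show "\<exists>y. DERIV ?f x :> y \<and> 0 \<le> y" by (intro exI[of _ "(((6+2*x)*(6+4*x) - 4*(x*(6+x)))/(6+4*x)^2 - 1/(1+x))"]) auto
  qed
  then show ?thesis by simp
qed

lemma ln_bounds_aux:
  fixes u :: real assumes "0 \<le> u"
  shows "2*u/(2+u) \<le> ln (1+u) \<and> ln (1+u) \<le> u*(6+u)/(6+4*u)"
  using ln_lower ln_upper assms by blast

lemma ln_consts:
  "1.945 \<le> ln (7::real)" "ln (7::real) \<le> 1.947"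
  "2.078 \<le> 3 * ln (2::real)" "ln (2::real) + ln 5 \<le> 2.304"
  "2.397 \<le> ln (11::real)" "2 * ln (2::real) + ln 5 \<le> 2.997"
  "0.404 \<le> ln (3::real) - ln 2" "ln (3::real) - ln 2 \<le> 0.407"
  "3 < ln (3::real) + ln 7"
proof -
  have p: "\<And>x::real. \<And>n. x > 0 \<Longrightarrow> ln (x^n) = real n * ln x" by (simp add: ln_realpow)
  have m: "\<And>x y::real. x > 0 \<Longrightarrow> y > 0 \<Longrightarrow> ln (x*y) = ln x + ln y" by (simp add: ln_mult)
  have d: "\<And>x y::real. x > 0 \<Longrightarrow> y > 0 \<Longrightarrow> ln (x/y) = ln x - ln y" by (simp add: ln_div)
  have l16: "ln (16::real) = 4 * ln 2" using p[of 2 4] by simp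
  have l15: "ln (15::real) = ln 3 + ln 5" using m[of 3 5] by simp
  have l25: "ln (25::real) = 2 * ln 5" using p[of 5 2] by simp
  have l8: "ln (8::real) = 3 * ln 2" using p[of 2 3] by simp
  have l24: "ln (24::real) = 3 * ln 2 + ln 3" using m[of 8 3] l8 by simp
  have l81: "ln (81::real) = 4 * ln 3" using p[of 3 4] by simp
  have l80: "ln (80::real) = 4 * ln 2 + ln 5" using m[of 16 5] l16 by simp
  have l50: "ln (50::real) = ln 2 + 2 * ln 5" using m[of 2 25] l25 by simp
  have l49: "ln (49::real) = 2 * ln 7" using p[of 7 2] by simp
  have l121: "ln (121::real) = 2 * ln 11" using p[of 11 2] by simp
  have l120: "ln (120::real) = 3 * ln 2 + ln 3 + ln 5" using m[of 8 15] l8 l15 by simp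
  have e1: "ln (1 + 1/15::real) = 4 * ln 2 - ln 3 - ln 5"
    using d[of 16 15] l16 l15 by simp
  have e2: "ln (1 + 1/24::real) = 2 * ln 5 - 3 * ln 2 - ln 3"
    using d[of 25 24] l25 l24 by simp
  have e3: "ln (1 + 1/80::real) = 4 * ln 3 - 4 * ln 2 - ln 5"
    using d[of 81 80] l81 l80 by simp
  have e4: "ln (1 + 1/49::real) = ln 2 + 2 * ln 5 - 2 * ln 7"
    using d[of 50 49] l50 l49 by simp
  have e5: "ln (1 + 1/120::real) = 2 * ln 11 - 3 * ln 2 - ln 3 - ln 5"
    using d[of 121 120] l121 l120 by simp
  note b1 = ln_bounds_aux[of "1/15"] and b2 = ln_bounds_aux[of "1/24"]
   and b3 = ln_bounds_aux[of "1/80"] and b4 = ln_bounds_aux[of "1/49"] and b5 = ln_bounds_aux[of "1/120"]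
  note all = e1 e2 e3 e4 e5 b1 b2 b3 b4 b5
  show "1.945 \<le> ln (7::real)" using all by (simp add: field_simps; linarith)
  show "ln (7::real) \<le> 1.947" using all by (simp add: field_simps; linarith)
  show "2.078 \<le> 3 * ln (2::real)" using all by (simp add: field_simps; linarith)
  show "ln (2::real) + ln 5 \<le> 2.304" using all by (simp add: field_simps; linarith)
  show "2.397 \<le> ln (11::real)" using all by (simp add: field_simps; linarith)
  show "2 * ln (2::real) + ln 5 \<le> 2.997" using all by (simp add: field_simps; linarith)
  show "0.404 \<le> ln (3::real) - ln 2" using all by (simp add: field_simps; linarith)
  show "ln (3::real) - ln 2 \<le> 0.407" using all by (simp add: field_simps; linarith)
  show "3 < ln (3::real) + ln 7" using all by (simp add: field_simps; linarith)
qed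

lemma quad:
  fixes A B G x :: real
  assumes "A > 0" "4*A*G > B^2"
  shows "-A*x^2 + B*x - G < 0"
proof -
  have "4*A*(-A*x^2 + B*x - G) = (B^2 - 4*A*G) - (2*A*x - B)^2"
    by (simp add: algebra_simps power2_eq_square)
  also have "\<dots> < 0" using assms zero_le_power2[of "2*A*x - B"] by linarith
  finally show ?thesis using assms(1) by (simp add: mult_less_0_iff)
qed

lemma grp:
  fixes K L l0 x a b ka kb p q :: real
  assumes K: "ka \<le> K" "K \<le> kb" "0 < ka"
    and L: "a \<le> L" "L \<le> b" "0 < a"
    and l0: "p \<le> l0" "l0 \<le> q" "q < 1"
    and s1: "1/ka < 1/3"
    and c1lo: "0 \<le> a^2*(1-1/ka) - 1"
    and x: "0 < x"
    and num: "4*(2/3 + (a^2*(1-1/ka) - 1)/(2*kb) + 1/kb)*(a^2*(1-q)) > (a^2*(1/ka-1/3) + b + 2 - p)^2"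
  shows "(L^2-x)*(l0 + 2*x/3 - 1) + x*L - (L^2*(1-1/K) - 1)*x
           - (L^2*(1-1/K) - 1)*x^2/(2*K) - x^2/K < 0"
proof -
  define c1 where "c1 = L^2*(1-1/K) - 1"
  define c1lo where "c1lo = a^2*(1-1/ka) - 1"
  define A0 where "A0 = 2/3 + c1lo/(2*kb) + 1/kb"
  define B0 where "B0 = a^2*(1/ka-1/3) + b + 2 - p"
  define G0 where "G0 = a^2*(1-q)"
  have Kpos: "0 < K" using K by linarith
  have k2pos: "0 < kb" using K by linarith
  have aL2: "a^2 \<le> L^2" using L by (intro power_mono) auto
  have iK: "1/K \<le> 1/ka" using K by (intro divide_left_mono) auto
  have iK2: "1/kb \<le> 1/K" using K by (intro divide_left_mono) auto
  have "a^2*(1-1/ka) \<le> L^2*(1-1/K)"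
    using aL2 iK s1 by (intro mult_mono) auto
  hence c1ge: "c1lo \<le> c1" unfolding c1_def c1lo_def by linarith
  have c1lo0: "0 \<le> c1lo" using c1lo unfolding c1lo_def .
  have "c1lo/(2*kb) \<le> c1/(2*K)"
    using c1ge c1lo0 K Kpos by (intro frac_le) auto
  hence alpha: "A0 \<le> 2/3 + c1/(2*K) + 1/K" unfolding A0_def using iK2 by linarith
  have s: "1/K - 1/3 < 0" using iK s1 by linarith
  have "L^2*(1/K-1/3) \<le> a^2*(1/K-1/3)" using aL2 s by (intro mult_right_mono_neg) auto
  also have "\<dots> \<le> a^2*(1/ka-1/3)" using iK by (intro mult_left_mono) auto
  finally have beta: "L^2*(1/K-1/3) + L + 2 - l0 \<le> B0" unfolding B0_def using L l0 by linarith
  have "L^2*(l0-1) \<le> a^2*(l0-1)" using aL2 l0 by (intro mult_right_mono_neg) auto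
  also have "\<dots> \<le> a^2*(q-1)" using l0 by (intro mult_left_mono) auto
  finally have gam: "L^2*(l0-1) \<le> -G0" unfolding G0_def by (simp add: algebra_simps)
  have "0 \<le> c1lo/(2*kb)" using c1lo0 k2pos by simp
  moreover have "0 < 1/kb" using k2pos by simp
  ultimately have A0pos: "A0 > 0" unfolding A0_def by linarith
  have eq: "(L^2-x)*(l0 + 2*x/3 - 1) + x*L - c1*x - c1*x^2/(2*K) - x^2/K
      = -(2/3 + c1/(2*K) + 1/K)*x^2 + (L^2*(1/K-1/3) + L + 2 - l0)*x + L^2*(l0-1)"
    unfolding c1_def using Kpos by (simp add: field_simps power2_eq_square)
  have "-(2/3 + c1/(2*K) + 1/K)*x^2 \<le> -A0*x^2" using alpha by (intro mult_right_mono) auto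
  moreover have "(L^2*(1/K-1/3) + L + 2 - l0)*x \<le> B0*x" using beta x by (intro mult_right_mono) auto
  moreover have "-A0*x^2 + B0*x - G0 < 0"
  proof (rule quad[OF A0pos])
    show "4*A0*G0 > B0^2" using num unfolding A0_def B0_def G0_def c1lo_def .
  qed
  ultimately show ?thesis using eq gam unfolding c1_def by linarith
qed

lemma ln_sq_less:
  fixes K :: real assumes "1 \<le> K"
  shows "(ln K)^2 < K"
proof -
  have sK: "sqrt K > 0" using assms by simp
  have e: "exp 1 > (2::real)" using exp_lower_Taylor_quadratic[of 1] by simp
  have "ln (sqrt K / exp 1) \<le> sqrt K / exp 1 - 1" using sK by (intro ln_le_minus_one) simp
  moreover have "ln (sqrt K / exp 1) = ln (sqrt K) - 1" using sK by (simp add: ln_div)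
  ultimately have l1: "ln (sqrt K) \<le> sqrt K / exp 1" by simp
  have "ln K = ln ((sqrt K)^2)" using assms by simp
  also have "\<dots> = 2 * ln (sqrt K)" using sK by (subst ln_realpow) auto
  finally have lK: "ln K \<le> 2 * sqrt K / exp 1" using l1 by simp
  have l0: "0 \<le> ln K" using assms by simp
  have "(ln K)^2 \<le> (2 * sqrt K / exp 1)^2" using lK l0 by (intro power_mono) auto
  also have "\<dots> = 4 * K / (exp 1)^2" using assms by (simp add: power_divide power_mult_distrib)
  also have "\<dots> < K"
  proof -
    have "(2::real)^2 < (exp 1)^2" using e by (intro power_strict_mono) auto
    hence "(exp 1)^2 > (4::real)" by simp
    then show ?thesis using assms by (simp add: divide_simps)
  qed
  finally show ?thesis .
qed

lemma ln_one_minus: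
  fixes d :: real assumes "0 \<le> d" "d < 1"
  shows "ln (1-d) \<le> -d - d^2/2"
proof -
  define u where "u = d/(1-d)"
  have u0: "0 \<le> u" unfolding u_def using assms by simp
  have "1 + u = 1/(1-d)" unfolding u_def using assms by (simp add: field_simps)
  hence "ln (1+u) = - ln (1-d)" using assms by (simp add: ln_div)
  moreover have "2*u/(2+u) = 2*d/(2-d)"
  proof -
    have "2+u = (2-d)/(1-d)" unfolding u_def using assms by (simp add: field_simps)
    moreover have "2*u = (2*d)/(1-d)" unfolding u_def by simp
    ultimately show ?thesis using assms by simp
  qed
  ultimately have "2*d/(2-d) \<le> - ln (1-d)" using ln_lower[OF u0] by simp
  moreover have "d + d^2/2 \<le> 2*d/(2-d)"
    using assms by (simp add: field_simps power2_eq_square)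
  ultimately show ?thesis by linarith
qed

lemma core:
  fixes K x :: real
  assumes Kc: "K = 7 \<or> (8 \<le> K \<and> K \<le> 10) \<or> (11 \<le> K \<and> K \<le> 20) \<or> 21 \<le> K"
    and x: "0 < x"
  shows "((ln K)^2 - x) * ln x + x * ln K - ((ln K)^2*(K-1) - K + x) * (x/K + x^2/(2*K^2)) < 0"
proof -
  define L where "L = ln K"
  have K7: "7 \<le> K" using Kc by auto
  have Kpos: "0 < K" using K7 by simp
  have "ln 7 \<le> L" unfolding L_def using K7 by simp
  hence L1: "1.945 \<le> L" using ln_consts(1) by linarith
  define c1 where "c1 = L^2*(1-1/K) - 1"
  have cub: "(L^2*(K-1) - K + x) * (x/K + x^2/(2*K^2)) = c1*x + c1*x^2/(2*K) + x^2/K + x^3/(2*K^2)"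
    unfolding c1_def using Kpos by (simp add: field_simps power2_eq_square power3_eq_cube)
  have "6/7 \<le> 1 - 1/K" using K7 by (simp add: field_simps)
  hence "L^2*(6/7) \<le> L^2*(1-1/K)" by (intro mult_left_mono) auto
  moreover have L1': "389/200 \<le> L" using L1 by simp
  moreover have "(389/200)*L \<le> L^2" using L1' by (simp add: power2_eq_square mult_right_mono)
  ultimately have c1L: "c1 > L" unfolding c1_def by linarith
  have t1: "0 \<le> c1*x^2/(2*K)" using c1L L1' Kpos by simp
  have t2: "0 \<le> x^3/(2*K^2)" using x Kpos by simp
  have T1: "(L^2 - x) * ln x + x * L - (L^2*(K-1) - K + x) * (x/K + x^2/(2*K^2))
      \<le> (L^2 - x) * ln x + x * L - c1*x - c1*x^2/(2*K) - x^2/K"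
    using cub t2 by linarith
  have "(L^2 - x) * ln x + x * L - c1*x - c1*x^2/(2*K) - x^2/K < 0"
  proof (cases "L^2 \<le> x")
    case True
    have "1 \<le> L" using L1' by simp
    hence "1 \<le> L^2" by (rule one_le_power)
    hence "0 \<le> ln x" using True by simp
    hence "(L^2 - x) * ln x \<le> 0" using True by (simp add: mult_nonpos_nonneg)
    moreover have "x * L < c1 * x" using c1L x by simp
    moreover have "0 \<le> x^2/K" using Kpos by simp
    ultimately show ?thesis using t1 by linarith
  next
    case False
    hence pos: "0 \<le> L^2 - x" by simp
    show ?thesis
    proof (cases "21 \<le> K")
      case True
      have "ln 21 \<le> L" unfolding L_def using True by simp
      moreover have "ln (21::real) = ln 3 + ln 7" using ln_mult[of 3 7] by simp
      ultimately have L3: "3 < L" using ln_consts(9) by linarith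
      have "L^2 < K" unfolding L_def using ln_sq_less K7 by simp
      hence "L^2/K < 1" using Kpos by simp
      define B where "B = 2 + L + L^2/K"
      have "0 \<le> L^2/K" using Kpos by simp
      hence B0: "0 < B" unfolding B_def using L1' by linarith
      have B2: "B < 2*L" unfolding B_def using \<open>L^2/K < 1\<close> L3 by linarith
      have "B^2 < (2*L)^2" using B0 B2 by (intro power_strict_mono) auto
      moreover have "(2*L)^2 = 4*1*L^2" by (simp add: power_mult_distrib)
      ultimately have q: "-1*x^2 + B*x - L^2 < 0" using quad[of 1 B "L^2" x] by simp
      have "ln x \<le> x - 1" using x by (intro ln_le_minus_one)
      hence "(L^2 - x) * ln x \<le> (L^2 - x) * (x - 1)" using pos by (intro mult_left_mono)
      moreover have "(L^2 - x) * (x - 1) + x * L - c1*x = -1*x^2 + B*x - L^2"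
        unfolding c1_def B_def using Kpos by (simp add: field_simps power2_eq_square)
      moreover have "0 \<le> x^2/K" using Kpos by simp
      ultimately show ?thesis using q t1 by linarith
    next
      case False
      define l0 where "l0 = ln 3 - ln (2::real)"
      have "ln (2*x/3) \<le> 2*x/3 - 1" using x by (intro ln_le_minus_one) simp
      moreover have "ln (2*x/3) = ln x - l0" unfolding l0_def using x
        by (simp add: ln_div ln_mult)
      ultimately have "ln x \<le> l0 + 2*x/3 - 1" by simp
      hence lx: "(L^2 - x) * ln x \<le> (L^2 - x) * (l0 + 2*x/3 - 1)" using pos by (intro mult_left_mono)
      have l0b: "0.404 \<le> l0" "l0 \<le> 0.407" unfolding l0_def using ln_consts(7,8) by auto
      have G: "(L^2-x)*(l0 + 2*x/3 - 1) + x*L - (L^2*(1-1/K) - 1)*x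
           - (L^2*(1-1/K) - 1)*x^2/(2*K) - x^2/K < 0"
      proof -
        consider "K = 7" | "8 \<le> K" "K \<le> 10" | "11 \<le> K" "K \<le> 20" using Kc False by auto
        then show ?thesis
        proof cases
          case 1
          have La: "1.945 \<le> L" "L \<le> 1.947" unfolding L_def using 1 ln_consts(1,2) by auto
          show ?thesis
            by (rule grp[where ka=7 and kb=7 and a="1.945" and b="1.947" and p="0.404" and q="0.407"])
               (use 1 La l0b x in \<open>auto simp: power2_eq_square\<close>)
        next
          case 2
          have "ln 8 \<le> L" "L \<le> ln 10" unfolding L_def using 2 by auto
          moreover have "ln (8::real) = 3 * ln 2" using ln_realpow[of 2 3] by simp
          moreover have "ln (10::real) = ln 2 + ln 5" using ln_mult[of 2 5] by simp
          ultimately have La: "2.078 \<le> L" "L \<le> 2.304" using ln_consts(3,4) by auto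
          show ?thesis
            by (rule grp[where ka=8 and kb=10 and a="2.078" and b="2.304" and p="0.404" and q="0.407"])
               (use 2 La l0b x in \<open>auto simp: power2_eq_square\<close>)
        next
          case 3
          have "ln 11 \<le> L" "L \<le> ln 20" unfolding L_def using 3 by auto
          moreover have "ln (20::real) = 2 * ln 2 + ln 5" using ln_mult[of 4 5] ln_realpow[of 2 2] by simp
          ultimately have La: "2.397 \<le> L" "L \<le> 2.997" using ln_consts(5,6) by auto
          show ?thesis
            by (rule grp[where ka=11 and kb=20 and a="2.397" and b="2.997" and p="0.404" and q="0.407"])
               (use 3 La l0b x in \<open>auto simp: power2_eq_square\<close>)
        qed
      qed
      show ?thesis using G lx unfolding c1_def by linarith
    qed
  qed
  with T1 show ?thesis unfolding L_def by linarith
qed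


lemma xlnx_cont: "continuous_on {0..1::real} (\<lambda>x. x * ln x)"
proof (rule continuous_on_IccI)
  show "((\<lambda>x::real. x * ln x) \<longlongrightarrow> 0 * ln 0) (at_right 0)" by simp real_asymp
  show "((\<lambda>x::real. x * ln x) \<longlongrightarrow> 1 * ln 1) (at_left 1)"
    by (intro tendsto_intros) auto
  show "((\<lambda>x::real. x * ln x) \<longlongrightarrow> x * ln x) (at x)" if "0 < x" "x < 1" for x
    using that by (intro tendsto_intros) auto
qed simp

definition gexpr :: "nat \<Rightarrow> real \<Rightarrow> real" where
  "gexpr k d = gfun k d powr rpar k / (exp (d * ln d) * exp ((1-d) * ln (1-d)))"

lemma rpar_pos: "7 \<le> k \<Longrightarrow> 0 < rpar k"
  unfolding rpar_def by simp

lemma gfun_nonneg: "d \<in> {0..1} \<Longrightarrow> 0 \<le> gfun k d"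
  unfolding gfun_def by simp

lemma pow00_self: "0 \<le> d \<Longrightarrow> pow00 d d = exp (d * ln d)"
  unfolding pow00_def powr_def by simp

lemma gamma_eq:
  assumes "7 \<le> k" "d \<in> {0..1}"
  shows "gamma_fun k d = gexpr k d"
proof -
  have "pow00 (gfun k d) (rpar k) = gfun k d powr rpar k"
    unfolding pow00_def using rpar_pos[OF assms(1)] by simp
  moreover have "pow00 d d = exp (d * ln d)" using assms by (simp add: pow00_self)
  moreover have "pow00 (1-d) (1-d) = exp ((1-d) * ln (1-d))" using assms by (simp add: pow00_self)
  ultimately show ?thesis unfolding gamma_fun_def gexpr_def by simp
qed

lemma gexpr_cont:
  assumes "7 \<le> k"
  shows "continuous_on {0..1} (gexpr k)"
proof -
  have ca: "continuous_on {0..1::real} (\<lambda>d. 1 - d)" by (intro continuous_intros)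
  have cb: "(\<lambda>d. 1-d) ` {0..1::real} \<subseteq> {0..1}" by auto
  have c1: "continuous_on {0..1::real} (\<lambda>d. (1-d) * ln (1-d))"
    using continuous_on_compose2[OF xlnx_cont ca cb] by simp
  have c2: "continuous_on {0..1} (\<lambda>d. gfun k d powr rpar k)"
    using rpar_pos[OF assms] gfun_nonneg
    by (intro continuous_on_powr') (auto simp: gfun_def intro!: continuous_intros)
  show ?thesis unfolding gexpr_def
    by (intro continuous_intros c1 c2 xlnx_cont continuous_on_exp) auto
qed

lemma key:
  assumes k: "7 \<le> k" and d: "0 < d" "d < 1"
  shows "gamma_fun k d < 1"
proof -
  define K where "K = real k"
  define L where "L = ln K"
  define x where "x = K * d"
  have K7: "7 \<le> K" unfolding K_def using k by simp
  have Kpos: "0 < K" using K7 by simp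
  have xpos: "0 < x" unfolding x_def using Kpos d by simp
  have g: "gfun k d = K * d * (1-d)^(k-1)" unfolding gfun_def K_def by simp
  have gpos: "0 < gfun k d" unfolding g using Kpos d by simp
  have lng: "ln (gfun k d) = L + ln d + (K-1) * ln (1-d)"
  proof -
    have "ln (gfun k d) = ln K + ln d + ln ((1-d)^(k-1))"
      unfolding g using Kpos d by (simp add: ln_mult)
    also have "ln ((1-d)^(k-1)) = real (k-1) * ln (1-d)" using d by (simp add: ln_realpow)
    also have "real (k-1) = K - 1" unfolding K_def using k by (simp add: of_nat_diff)
    finally show ?thesis unfolding L_def .
  qed
  have lnx: "ln x = L + ln d" unfolding x_def L_def using Kpos d by (simp add: ln_mult)
  define E where "E = rpar k * ln (gfun k d) - d * ln d - (1-d) * ln (1-d)"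
  have gam: "gamma_fun k d = exp E"
  proof -
    have "gamma_fun k d = gexpr k d" using gamma_eq k d by simp
    also have "\<dots> = exp (rpar k * ln (gfun k d)) / (exp (d * ln d) * exp ((1-d) * ln (1-d)))"
      unfolding gexpr_def powr_def using gpos by simp
    also have "\<dots> = exp E" unfolding E_def by (simp add: exp_diff exp_add)
    finally show ?thesis .
  qed
  have rp: "rpar k = L^2 / K" unfolding rpar_def L_def K_def by simp
  have KE: "K * E = (L^2 - x) * ln x + x * L + (L^2*(K-1) - K + x) * ln (1-d)"
    unfolding E_def rp lng lnx unfolding x_def using Kpos by (simp add: field_simps power2_eq_square)
  have "ln 7 \<le> L" unfolding L_def using K7 by simp
  hence L1: "389/200 \<le> L" using ln_consts(1) by simp
  have "(389/200)*(389/200) \<le> L*L" using L1 by (intro mult_mono) auto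
  hence "2 \<le> L^2" by (simp add: power2_eq_square)
  hence "2*(K-1) \<le> L^2*(K-1)" using K7 by (intro mult_right_mono) auto
  hence C0: "0 \<le> L^2*(K-1) - K + x"
  proof -
    assume h: "2*(K-1) \<le> L^2*(K-1)"
    have "2*(K-1) - K + x \<ge> 0" using K7 xpos by simp
    with h show ?thesis by linarith
  qed
  have "ln (1-d) \<le> -d - d^2/2" using d by (intro ln_one_minus) auto
  also have "-d - d^2/2 = -(x/K + x^2/(2*K^2))" unfolding x_def using Kpos
    by (simp add: field_simps power2_eq_square)
  finally have "(L^2*(K-1) - K + x) * ln (1-d) \<le> (L^2*(K-1) - K + x) * (-(x/K + x^2/(2*K^2)))"
    using C0 by (intro mult_left_mono) auto
  moreover have Kc: "K = 7 \<or> (8 \<le> K \<and> K \<le> 10) \<or> (11 \<le> K \<and> K \<le> 20) \<or> 21 \<le> K"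
  proof -
    have "k = 7 \<or> (8 \<le> k \<and> k \<le> 10) \<or> (11 \<le> k \<and> k \<le> 20) \<or> 21 \<le> k" using k by linarith
    then show ?thesis unfolding K_def by auto
  qed
  note cr = core[OF Kc xpos]
  ultimately have "K * E < 0" using KE cr unfolding L_def by (simp add: algebra_simps)
  hence "E < 0" using Kpos by (simp add: mult_less_0_iff)
  thus ?thesis using gam by simp
qed

theorem mainTheorem5:
  fixes k :: nat
  assumes "k \<ge> 7"
  shows "\<exists>\<delta>0\<in>{0..1}. (\<forall>\<delta>\<in>{0..1}. gamma_fun k \<delta> \<le> gamma_fun k \<delta>0) \<and> gamma_fun k \<delta>0 < 1"
proof -
  have "continuous_on {0..1} (gamma_fun k) = continuous_on {0..1} (gexpr k)"
    by (rule continuous_on_cong) (auto simp: gamma_eq[OF assms])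
  hence "continuous_on {0..1} (gamma_fun k)" using gexpr_cont[OF assms] by simp
  then obtain d0 where d0: "d0 \<in> {0..1::real}" "\<forall>y\<in>{0..1}. gamma_fun k y \<le> gamma_fun k d0"
    using continuous_attains_sup[of "{0..1::real}" "gamma_fun k"] by auto
  have lt: "gamma_fun k d0 < 1"
  proof (cases "d0 = 0 \<or> d0 = 1")
    case True
    have "gfun k d0 = 0" using True assms unfolding gfun_def by auto
    hence "gamma_fun k d0 = 0"
      unfolding gamma_fun_def pow00_def using rpar_pos[OF assms] by simp
    thus ?thesis by simp
  next
    case False
    thus ?thesis using d0(1) key[OF assms] by auto
  qed
  show ?thesis using d0 lt by blast
qed

end
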